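(* Let $\pi_\varepsilon$ be the (unique) optimizer of the quadratically regularized optimal transport problem $$\mathrm{QOT}_\varepsilon(\mu,\nu)=\inf_{\pi\in\Pi(\mu,\nu)}\Big\{\int c\,d\pi+\frac{\varepsilon}{2}\Big\|\frac{d\pi}{dP}\Big\|_{L^2(P)}^2\Big\},\qquad c(x,y)=\tfrac12\|x-y\|^2,\ P=\mu\otimes\nu,$$ and let the following assumptions hold: (i) there is a bounded connected open Lipschitz domain $\Omega\subset B(0,1)\subset\mathbb{R}^d$ with $\mu(dx)=\rho_\mu(x)\mathbf 1_\Omega(x)\,dx$ and $0<\underline\lambda_\mu\le\rho_\mu\le\overline\lambda_\mu<\infty$ a.e. on $\Omega$; (ii) $\nu\ll\mathrm{Leb}$, $\mathrm{spt}\,\nu\subseteq B(0,1)$, and $d\nu/dy\le\overline\lambda_\nu<\infty$ on $\mathrm{spt}\,\nu$; (iii) the Monge (Brenier) map $T=\nabla\varphi$ from $\mu$ to $\nu$ is $L$-Lipschitz. Set $$C_0:=\overline\lambda_\nu(1+L^2)^{d/2}\omega_d,\qquad C_{\mathrm{lin}}:=\int c\,dP-\mathrm{OT}(\mu,\nu)+\frac12,$$ where $\omega_d=\pi^{d/2}/\Gamma(\frac d2+1)$ is the volume of the unit ball and $\mathrm{OT}(\mu,\nu)=\inf_{\pi\in\Pi(\mu,\nu)}\int c\,d\pi$. Let $C_{\mathrm{val}}\ge 1$ be a constant such that the value gap $\Delta_\varepsilon:=\mathrm{QOT}_\varepsilon(\mu,\nu)-\mathrm{OT}(\mu,\nu)$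 satisfies $C_{\mathrm{val}}^{-1}\varepsilon^{\frac{2}{2+d}}\le\Delta_\varepsilon\le C_{\mathrm{val}}\varepsilon^{\frac{2}{2+d}}$ for all $\varepsilon\in(0,1]$ (such a constant exists by the convergence rates of Eckstein–Nutz for compactly supported marginals). Then, with $$c_{\mathrm{sm}}=\Big(\frac1{2C_0C_{\mathrm{val}}}\Big)^{1/d},\qquad c_{\mathrm{lg}}=\Big(\frac1{2C_0C_{\mathrm{lin}}}\Big)^{1/d}>0,$$ for all $\varepsilon>0$, $$\mathrm{dist}\bigl(\mathrm{spt}\,\pi_\varepsilon;\mathrm{gr}\,T\bigr)\ge\begin{cases}c_{\mathrm{sm}}\varepsilon^{\frac{1}{2+d}},&\varepsilon\in(0,1],\\ c_{\mathrm{lg}},&\varepsilon\ge1,\end{cases}$$ where $\mathrm{gr}\,T=\{(x,T(x)):x\in\mathbb{R}^d\}$ and $\mathrm{dist}(A;B)=\sup_{a\in A}\inf_{b\in B}\|a-b\|$ is the directed Hausdorff distance in $\mathbb{R}^d\times\mathbb{R}^d$. In particular, $\mathrm{dist}(\mathrm{spt}\,\pi_\varepsilon;\mathrm{gr}\,T)\ge\min\{c_{\mathrm{sm}}\varepsilon^{\frac{1}{2+d}},c_{\mathrm{lg}}\}$ for all $\varepsilon>0$.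
   Context: Quadratically regularized optimal transport with quadratic cost $c(x,y)=\frac12\|x-y\|^2$ between compactly supported probability measures $\mu,\nu$ on $\mathbb{R}^d$ (supports in the unit ball), with reference measure $P=\mu\otimes\nu$ and optimizer $\pi_\varepsilon\ll P$. $\Pi(\mu,\nu)$ is the set of couplings of $\mu$ and $\nu$. The constants $c_{\mathrm{sm}},c_{\mathrm{lg}}$ depend only on $d$, $L$, $\overline\lambda_\nu$, $C_{\mathrm{val}}$ (and $C_{\mathrm{lin}}$). *)

theory Defs
  imports "HOL-Probability.Probability"
begin

definition qcost :: "'a::euclidean_space \<times> 'a \<Rightarrow> real" where
  "qcost z = (norm (fst z - snd z))\<^sup>2 / 2"

definition measure_support :: "'b::topological_space measure \<Rightarrow> 'b set" where
  "measure_support M = {x. \<forall>U. open U \<longrightarrow> x \<in> U \<longrightarrow> 0 < emeasure M U}"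

definition couplings :: "'a::euclidean_space measure \<Rightarrow> 'a measure \<Rightarrow> ('a \<times> 'a) measure set" where
  "couplings \<mu> \<nu> = {\<pi>. prob_space \<pi> \<and> sets \<pi> = sets borel \<and>
      distr \<pi> borel fst = \<mu> \<and> distr \<pi> borel snd = \<nu>}"

definition transport_cost :: "('a::euclidean_space \<times> 'a) measure \<Rightarrow> ennreal" where
  "transport_cost \<pi> = (\<integral>\<^sup>+ z. ennreal (qcost z) \<partial>\<pi>)"

definition qot_objective :: "real \<Rightarrow> 'a::euclidean_space measure \<Rightarrow> 'a measure \<Rightarrow> ('a \<times> 'a) measure \<Rightarrow> ennreal" where
  "qot_objective \<epsilon> \<mu> \<nu> \<pi> =
     (if absolutely_continuous (\<mu> \<Otimes>\<^sub>M \<nu>) \<pi>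
      then transport_cost \<pi> + ennreal (\<epsilon> / 2) *
             (\<integral>\<^sup>+ z. (RN_deriv (\<mu> \<Otimes>\<^sub>M \<nu>) \<pi> z)\<^sup>2 \<partial>(\<mu> \<Otimes>\<^sub>M \<nu>))
      else \<infinity>)"

text \<open>OT and QOT values (finite under the standing assumptions, as the cost is bounded on the supports).\<close>
definition OT_value :: "'a::euclidean_space measure \<Rightarrow> 'a measure \<Rightarrow> real" where
  "OT_value \<mu> \<nu> = enn2real (INF \<pi>\<in>couplings \<mu> \<nu>. transport_cost \<pi>)"

definition QOT_value :: "real \<Rightarrow> 'a::euclidean_space measure \<Rightarrow> 'a measure \<Rightarrow> real" where
  "QOT_value \<epsilon> \<mu> \<nu> = enn2real (INF \<pi>\<in>couplings \<mu> \<nu>. qot_objective \<epsilon> \<mu> \<nu> \<pi>)"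

definition qot_optimizer :: "real \<Rightarrow> 'a::euclidean_space measure \<Rightarrow> 'a measure \<Rightarrow> ('a \<times> 'a) measure \<Rightarrow> bool" where
  "qot_optimizer \<epsilon> \<mu> \<nu> \<pi> \<longleftrightarrow> \<pi> \<in> couplings \<mu> \<nu> \<and>
     qot_objective \<epsilon> \<mu> \<nu> \<pi> = (INF p\<in>couplings \<mu> \<nu>. qot_objective \<epsilon> \<mu> \<nu> p)"

text \<open>Lipschitz domain: open set whose boundary is locally (after a rotation, encoded by a unit
  direction e) the strict epigraph of a Lipschitz function on the hyperplane orthogonal to e.\<close>
definition lipschitz_domain :: "'a::euclidean_space set \<Rightarrow> bool" where
  "lipschitz_domain \<Omega> \<longleftrightarrow> open \<Omega> \<and>
     (\<forall>x\<in>frontier \<Omega>. \<exists>r>0. \<exists>e. norm e = 1 \<and> (\<exists>g K. K-lipschitz_on {z. z \<bullet> e = 0} g \<and>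
        \<Omega> \<inter> ball x r = {y \<in> ball x r. g (y - (y \<bullet> e) *\<^sub>R e) < y \<bullet> e}))"

definition graph_of :: "('a \<Rightarrow> 'a) \<Rightarrow> ('a \<times> 'a) set" where
  "graph_of T = {(x, T x) | x. True}"

definition directed_hausdorff :: "'b::metric_space set \<Rightarrow> 'b set \<Rightarrow> ereal" where
  "directed_hausdorff A B = (SUP a\<in>A. ereal (infdist a B))"

definition unit_ball_volume :: "nat \<Rightarrow> real" where
  "unit_ball_volume d = pi powr (real d / 2) / Gamma (real d / 2 + 1)"

end

theory Submission
  imports Defs
begin


lemma support_props:
  fixes M :: "'b::second_countable_topology measure"
  assumes sM: "sets M = sets borel"
  shows "closed (measure_support M)" "emeasure M (- measure_support M) = 0"
proof -
  have eq: "- measure_support M = \<Union>{U. open U \<and> emeasure M U = 0}"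
    unfolding measure_support_def by (auto simp: not_less)
  show "closed (measure_support M)"
    unfolding closed_def eq by auto
  obtain F where F: "F \<subseteq> {U. open U \<and> emeasure M U = 0}" "countable F"
     "\<Union>F = \<Union>{U. open U \<and> emeasure M U = 0}"
    using Lindelof[of "{U. open U \<and> emeasure M U = 0}"] by blast
  have "(\<Union>U\<in>F. U) \<in> null_sets M"
    using F(1,2) sM by (intro null_sets_UN') (auto simp: null_sets_def)
  then show "emeasure M (- measure_support M) = 0"
    using F(3) eq by auto
qed

lemma cs2: fixes a b L :: real shows "a + L * b \<le> sqrt (1 + L\<^sup>2) * sqrt (b\<^sup>2 + a\<^sup>2)"
proof -
  have "(a + L*b)\<^sup>2 \<le> (1 + L\<^sup>2) * (b\<^sup>2 + a\<^sup>2)"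
    using sum_squares_ge_zero[of "L*a - b" 0]
    by (simp add: power2_eq_square algebra_simps)
  then show ?thesis by (metis real_le_rsqrt real_sqrt_mult)
qed

lemma graph_bound:
  fixes T :: "'a::euclidean_space \<Rightarrow> 'a"
  assumes T: "L-lipschitz_on UNIV T"
  shows "norm (snd z - T (fst z)) \<le> sqrt (1 + L\<^sup>2) * infdist z (graph_of T)"
proof -
  have L: "0 \<le> L" using T lipschitz_on_nonneg by blast
  have "norm (snd z - T (fst z)) \<le> sqrt (1 + L\<^sup>2) * dist z g" if g: "g \<in> graph_of T" for g
  proof -
    obtain x' where g': "g = (x', T x')" using g unfolding graph_of_def by auto
    obtain x y where z: "z = (x, y)" by fastforce
    have "norm (y - T x) \<le> norm (y - T x') + norm (T x' - T x)"
      by (metis add_diff_eq diff_add_cancel norm_triangle_ineq)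
    also have "norm (T x' - T x) \<le> L * dist x x'"
      using lipschitz_onD[OF T, of x' x] by (simp add: dist_norm norm_minus_commute)
    also have "norm (y - T x') + L * dist x x' \<le> sqrt (1 + L\<^sup>2) * sqrt ((dist x x')\<^sup>2 + (dist y (T x'))\<^sup>2)"
      using cs2[of "norm (y - T x')" L "dist x x'"] by (simp add: dist_norm)
    finally show ?thesis using z g' by (simp add: dist_Pair_Pair)
  qed
  then have "norm (snd z - T (fst z)) / sqrt (1 + L\<^sup>2) \<le> infdist z (graph_of T)"
    unfolding infdist_def
    apply (auto simp: graph_of_def intro!: cINF_greatest)
    by (smt (verit) divide_le_eq mult.commute real_sqrt_gt_zero zero_le_power2)
  then show ?thesis
    by (smt (verit) divide_le_eq mult.commute real_sqrt_gt_zero zero_le_power2)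
qed

lemma nu_bound:
  fixes \<nu> :: "'a::euclidean_space measure"
  assumes s\<nu>: "sets \<nu> = sets borel" and fm: "f \<in> borel_measurable lborel"
    and \<nu>: "\<nu> = density lborel f" and fb: "\<forall>y\<in>measure_support \<nu>. f y \<le> ennreal lnu"
    and B: "B \<in> sets borel"
  shows "emeasure \<nu> B \<le> ennreal lnu * emeasure lborel B"
proof -
  let ?S = "measure_support \<nu>"
  have cS: "closed ?S" and nS: "emeasure \<nu> (- ?S) = 0" using support_props[OF s\<nu>] by auto
  have Sm: "?S \<in> sets borel" using cS by auto
  have "emeasure \<nu> B \<le> emeasure \<nu> (B \<inter> ?S) + emeasure \<nu> (B - ?S)"
    by (rule order_trans[OF _ emeasure_subadditive]) (use B Sm s\<nu> in \<open>auto intro!: emeasure_mono\<close>)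
  also have "emeasure \<nu> (B - ?S) \<le> emeasure \<nu> (- ?S)"
    by (rule emeasure_mono) (use Sm s\<nu> in auto)
  also have "emeasure \<nu> (B \<inter> ?S) = (\<integral>\<^sup>+ y. f y * indicator (B \<inter> ?S) y \<partial>lborel)"
    using B Sm fm by (subst \<nu>) (simp add: emeasure_density)
  also have "\<dots> \<le> (\<integral>\<^sup>+ y. ennreal lnu * indicator B y \<partial>lborel)"
    using fb by (intro nn_integral_mono) (auto split: split_indicator)
  also have "\<dots> = ennreal lnu * emeasure lborel B"
    using B by (simp add: nn_integral_cmult_indicator)
  finally show ?thesis using nS by simp
qed

lemma prod_bound:
  fixes \<mu> \<nu> :: "'a::euclidean_space measure" and T :: "'a \<Rightarrow> 'a"
  assumes p\<mu>: "prob_space \<mu>" and s\<mu>: "sets \<mu> = sets borel"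
    and p\<nu>: "prob_space \<nu>" and s\<nu>: "sets \<nu> = sets borel"
    and nb: "\<And>B. B \<in> sets borel \<Longrightarrow> emeasure \<nu> B \<le> ennreal lnu * emeasure lborel B"
    and T: "L-lipschitz_on UNIV T" and r: "0 \<le> r"
  shows "emeasure (\<mu> \<Otimes>\<^sub>M \<nu>) {z. infdist z (graph_of T) \<le> r}
     \<le> ennreal (lnu * (1 + L\<^sup>2) powr (real DIM('a) / 2) * unit_ball_volume DIM('a) * r ^ DIM('a))"
proof -
  let ?S = "{z. infdist z (graph_of T) \<le> r}"
  let ?R = "sqrt (1 + L\<^sup>2) * r"
  interpret \<nu>: prob_space \<nu> by fact
  interpret \<mu>: prob_space \<mu> by fact
  have cl: "closed ?S"
    by (intro closed_Collect_le continuous_intros)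
  have Sm: "?S \<in> sets (\<mu> \<Otimes>\<^sub>M \<nu>)"
  proof -
    have "sets (\<mu> \<Otimes>\<^sub>M \<nu>) = sets (borel \<Otimes>\<^sub>M borel)"
      using s\<mu> s\<nu> by (intro sets_pair_measure_cong)
    also have "\<dots> = sets borel" by (metis borel_prod)
    finally show ?thesis using cl by auto
  qed
  have "emeasure (\<mu> \<Otimes>\<^sub>M \<nu>) ?S = (\<integral>\<^sup>+x. emeasure \<nu> (Pair x -` ?S) \<partial>\<mu>)"
    by (rule \<nu>.emeasure_pair_measure_alt[OF Sm])
  also have "\<dots> \<le> (\<integral>\<^sup>+x. ennreal lnu * emeasure lborel (cball (T x) ?R) \<partial>\<mu>)"
  proof (intro nn_integral_mono)
    fix x
    have sub: "Pair x -` ?S \<subseteq> cball (T x) ?R"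
    proof
      fix y assume "y \<in> Pair x -` ?S"
      then have "infdist (x, y) (graph_of T) \<le> r" by auto
      moreover have "norm (y - T x) \<le> sqrt (1 + L\<^sup>2) * infdist (x, y) (graph_of T)"
        using graph_bound[OF T, of "(x, y)"] by simp
      ultimately show "y \<in> cball (T x) ?R"
        by (smt (verit, best) dist_norm mem_cball mult_left_mono norm_minus_commute real_sqrt_ge_zero zero_le_power2)
    qed
    have "emeasure \<nu> (Pair x -` ?S) \<le> emeasure \<nu> (cball (T x) ?R)"
      using sub s\<nu> by (intro emeasure_mono) auto
    also have "\<dots> \<le> ennreal lnu * emeasure lborel (cball (T x) ?R)"
      by (intro nb) auto
    finally show "emeasure \<nu> (Pair x -` ?S) \<le> ennreal lnu * emeasure lborel (cball (T x) ?R)" .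
  qed
  also have "\<dots> = (\<integral>\<^sup>+x. ennreal lnu * ennreal (unit_ball_vol DIM('a) * ?R ^ DIM('a)) \<partial>\<mu>)"
    using r by (simp add: emeasure_cball)
  also have "\<dots> = ennreal lnu * ennreal (unit_ball_vol DIM('a) * ?R ^ DIM('a))"
    by (simp add: \<mu>.emeasure_space_1)
  also have "\<dots> \<le> ennreal (lnu * (1 + L\<^sup>2) powr (real DIM('a) / 2) * unit_ball_volume DIM('a) * r ^ DIM('a))"
  proof (cases "lnu \<ge> 0")
    case True
    have "?R ^ DIM('a) = (1 + L\<^sup>2) powr (real DIM('a) / 2) * r ^ DIM('a)"
    proof -
      have "(sqrt (1 + L\<^sup>2)) ^ DIM('a) = (sqrt (1 + L\<^sup>2)) powr (real DIM('a))"
        by (rule powr_realpow[symmetric]) (simp add: add_pos_nonneg)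
      also have "\<dots> = (1 + L\<^sup>2) powr (real DIM('a) / 2)"
        by (simp add: powr_half_sqrt[symmetric] powr_powr)
      finally show ?thesis by (simp add: power_mult_distrib)
    qed
    then show ?thesis using True r
      by (simp add: ennreal_mult[symmetric] unit_ball_volume_def unit_ball_vol_def mult_ac)
  next
    case False
    then show ?thesis by (simp add: ennreal_neg)
  qed
  finally show ?thesis .
qed



lemma root_bound:
  fixes r K :: real and n :: nat
  assumes n: "n \<ge> 1" and r: "0 \<le> r" and K: "0 \<le> K" and le: "K \<le> r ^ n"
  shows "K powr (1 / real n) \<le> r"
proof -
  have "K powr (1 / real n) \<le> (r ^ n) powr (1 / real n)"
    using K le by (intro powr_mono2) auto
  also have "(r ^ n) powr (1 / real n) = r"
  proof (cases "r = 0")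
    case True then show ?thesis using n by simp
  next
    case False
    then have "r ^ n = r powr real n" using r by (simp add: powr_realpow)
    then show ?thesis using n False r by (simp add: powr_powr)
  qed
  finally show ?thesis .
qed

lemma small_case:
  fixes r s a C0 Cval \<epsilon> :: real and n :: nat
  assumes n: "n \<ge> 1" and C0: "0 < C0" and r: "0 \<le> r" and s: "0 \<le> s" and a: "0 \<le> a"
    and sa: "1 \<le> s * a" and sC: "s \<le> C0 * r ^ n" and e: "0 < \<epsilon>" "\<epsilon> \<le> 1"
    and gap: "\<epsilon> / 2 * a \<le> Cval * \<epsilon> powr (2 / (2 + real n))" and Cv: "1 \<le> Cval"
  shows "(1 / (2 * C0 * Cval)) powr (1 / real n) * \<epsilon> powr (1 / (2 + real n)) \<le> r"
proof -
  let ?p = "\<epsilon> powr (2 / (2 + real n))"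
  have pp: "0 < ?p" using e by simp
  have apos: "0 < a" using sa s a by (metis mult_zero_right not_le order.not_eq_order_implies_strict zero_less_one)
  have "\<epsilon> / (2 * Cval * ?p) \<le> 1 / a"
    using gap apos pp Cv by (simp add: field_simps)
  also have "1 / a \<le> s" using sa apos by (simp add: field_simps)
  finally have "\<epsilon> / (2 * Cval * ?p) \<le> C0 * r ^ n" using sC by linarith
  then have k: "\<epsilon> / (2 * Cval * ?p) / C0 \<le> r ^ n" using C0 by (subst pos_divide_le_eq) (auto simp: mult.commute)
  have "\<epsilon> / ?p = \<epsilon> powr (real n / (2 + real n))"
  proof -
    have "\<epsilon> / ?p = \<epsilon> powr (1 - 2 / (2 + real n))" using e by (simp add: powr_diff)
    also have "1 - 2 / (2 + real n) = real n / (2 + real n)" by (simp add: field_simps)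
    finally show ?thesis .
  qed
  note eqp = this
  have eq0: "\<epsilon> / (2 * Cval * ?p) / C0 = (\<epsilon> / ?p) * (1 / (2 * C0 * Cval))"
    using pp C0 Cv by (simp add: field_simps)
  have eq: "\<epsilon> / (2 * Cval * ?p) / C0 = (1 / (2 * C0 * Cval)) * \<epsilon> powr (real n / (2 + real n))"
    unfolding eq0 eqp by (rule mult.commute)
  have "((1 / (2 * C0 * Cval)) * \<epsilon> powr (real n / (2 + real n))) powr (1 / real n) \<le> r"
    using root_bound[OF n r _ k[unfolded eq]] C0 Cv by simp
  moreover have "((1 / (2 * C0 * Cval)) * \<epsilon> powr (real n / (2 + real n))) powr (1 / real n)
     = (1 / (2 * C0 * Cval)) powr (1 / real n) * \<epsilon> powr (1 / (2 + real n))"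
  proof -
    have "((1 / (2 * C0 * Cval)) * \<epsilon> powr (real n / (2 + real n))) powr (1 / real n)
       = (1 / (2 * C0 * Cval)) powr (1 / real n) * (\<epsilon> powr (real n / (2 + real n))) powr (1 / real n)"
      using C0 Cv by (intro powr_mult; simp)
    also have "(\<epsilon> powr (real n / (2 + real n))) powr (1 / real n) = \<epsilon> powr (1 / (2 + real n))"
      using n by (simp add: powr_powr)
    finally show ?thesis .
  qed
  ultimately show ?thesis by simp
qed

lemma large_case:
  fixes r s a C0 Clin \<epsilon> :: real and n :: nat
  assumes n: "n \<ge> 1" and C0: "0 < C0" and r: "0 \<le> r" and s: "0 \<le> s" and a: "0 \<le> a"
    and sa: "1 \<le> s * a" and sC: "s \<le> C0 * r ^ n" and e: "1 \<le> \<epsilon>"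
    and gap: "\<epsilon> / 2 * a \<le> Clin - 1/2 + \<epsilon> / 2" and Cl: "1/2 \<le> Clin"
  shows "(1 / (2 * C0 * Clin)) powr (1 / real n) \<le> r"
proof -
  have apos: "0 < a" using sa s a by (metis mult_zero_right not_le order.not_eq_order_implies_strict zero_less_one)
  have "a \<le> 2 * Clin"
  proof -
    have "\<epsilon> * a \<le> 2 * Clin - 1 + \<epsilon>" using gap by simp
    moreover have "(\<epsilon> - 1) * (2 * Clin - 1) \<ge> 0" using e Cl by simp
    ultimately have "\<epsilon> * a \<le> \<epsilon> * (2 * Clin)" by (simp add: algebra_simps)
    then show ?thesis using e by simp
  qed
  then have "1 / (2 * Clin) \<le> 1 / a" using apos by (simp add: frac_le)
  also have "1 / a \<le> s" using sa apos by (simp add: field_simps)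
  finally have "1 / (2 * Clin) \<le> C0 * r ^ n" using sC by linarith
  then have k: "1 / (2 * C0 * Clin) \<le> r ^ n" using C0 Cl by (simp add: field_simps)
  show ?thesis using root_bound[OF n r _ k] C0 Cl by simp
qed



lemma amgm_enn:
  fixes x :: ennreal and t :: real and i :: ennreal
  assumes t: "0 < t" and i: "i = 0 \<or> i = 1"
  shows "x * i \<le> ennreal (1 / (2 * t)) * x\<^sup>2 + ennreal (t / 2) * i"
proof (cases x)
  case (real y)
  have "y \<le> y\<^sup>2 / (2 * t) + t / 2"
  proof -
    have "0 \<le> (y - t)\<^sup>2" by simp
    then have "2 * t * y \<le> y\<^sup>2 + t\<^sup>2" by (simp add: power2_eq_square algebra_simps)
    then show ?thesis using t by (simp add: field_simps power2_eq_square)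
  qed
  then have "ennreal y \<le> ennreal (1 / (2 * t) * y\<^sup>2 + t / 2)" by (simp add: ennreal_leI)
  also have "\<dots> = ennreal (1 / (2 * t)) * (ennreal y)\<^sup>2 + ennreal (t / 2)"
  proof -
    have "ennreal (1 / (2 * t) * y\<^sup>2 + t / 2) = ennreal (1 / (2 * t) * y\<^sup>2) + ennreal (t / 2)"
      using t by (intro ennreal_plus) auto
    also have "ennreal (1 / (2 * t) * y\<^sup>2) = ennreal (1 / (2 * t)) * ennreal (y\<^sup>2)"
      using t by (intro ennreal_mult) auto
    also have "ennreal (y\<^sup>2) = (ennreal y)\<^sup>2"
      using real by (simp add: ennreal_power)
    finally show ?thesis .
  qed
  finally show ?thesis using i real by auto
next
  case top
  then show ?thesis using i t by (auto simp: power2_eq_square ennreal_mult_top)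
qed

lemma cs_enn:
  fixes h :: "'b \<Rightarrow> ennreal"
  assumes h: "h \<in> borel_measurable M" and S: "S \<in> sets M"
    and one: "1 \<le> (\<integral>\<^sup>+ z. h z * indicator S z \<partial>M)"
    and A: "(\<integral>\<^sup>+ z. (h z)\<^sup>2 \<partial>M) < \<top>" and fin: "emeasure M S < \<top>"
  shows "1 \<le> enn2real (emeasure M S) * enn2real (\<integral>\<^sup>+ z. (h z)\<^sup>2 \<partial>M)"
proof -
  define a where "a = enn2real (\<integral>\<^sup>+ z. (h z)\<^sup>2 \<partial>M)"
  define s where "s = enn2real (emeasure M S)"
  have aeq: "(\<integral>\<^sup>+ z. (h z)\<^sup>2 \<partial>M) = ennreal a" using A unfolding a_def by simp
  have seq: "emeasure M S = ennreal s" using fin unfolding s_def by simp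
  have a0: "0 \<le> a" "0 \<le> s" unfolding a_def s_def by auto
  have key: "1 \<le> a / (2 * t) + t * s / 2" if t: "0 < t" for t
  proof -
    have "1 \<le> (\<integral>\<^sup>+ z. h z * indicator S z \<partial>M)" by (rule one)
    also have "\<dots> \<le> (\<integral>\<^sup>+ z. ennreal (1 / (2 * t)) * (h z)\<^sup>2 + ennreal (t / 2) * indicator S z \<partial>M)"
      by (intro nn_integral_mono amgm_enn t) (auto split: split_indicator)
    also have "\<dots> = ennreal (1 / (2 * t)) * (\<integral>\<^sup>+ z. (h z)\<^sup>2 \<partial>M) + ennreal (t / 2) * emeasure M S"
      using h S by (simp add: nn_integral_add nn_integral_cmult nn_integral_cmult_indicator)
    also have "\<dots> = ennreal (a / (2 * t) + t * s / 2)"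
      using t a0 unfolding aeq seq by (simp add: ennreal_plus[symmetric] ennreal_mult[symmetric] del: ennreal_plus)
    finally show ?thesis by (simp add: ennreal_le_iff[symmetric] del: ennreal_le_iff)
  qed
  show ?thesis
  proof (cases "s = 0")
    case True
    have "1 \<le> a / (2 * (a + 1))" using key[of "a + 1"] a0 True by simp
    moreover have "a / (2 * (a + 1)) < 1" using a0 by (simp add: field_simps)
    ultimately show ?thesis by simp
  next
    case False
    then have sp: "0 < s" using a0 by simp
    have "1 \<le> a / (2 * (1 / s)) + (1 / s) * s / 2" using key[of "1 / s"] sp by simp
    then have "1 \<le> a * s / 2 + 1 / 2" using sp by (simp add: field_simps)
    then show ?thesis unfolding a_def s_def by (simp add: algebra_simps)
  qed
qed



theorem theorem3p6:
  fixes \<mu> \<nu> :: "'a::euclidean_space measure"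
    and \<Omega> :: "'a set" and \<rho> :: "'a \<Rightarrow> real"
    and lmu_lo lmu_hi lnu L Cval :: real
    and \<phi> :: "'a \<Rightarrow> real" and T :: "'a \<Rightarrow> 'a"
  defines "d \<equiv> real DIM('a)"
  defines "C0 \<equiv> lnu * (1 + L\<^sup>2) powr (d / 2) * unit_ball_volume DIM('a)"
  defines "Clin \<equiv> (\<integral>z. qcost z \<partial>(\<mu> \<Otimes>\<^sub>M \<nu>)) - OT_value \<mu> \<nu> + 1 / 2"
  defines "csm \<equiv> (1 / (2 * C0 * Cval)) powr (1 / d)"
  defines "clg \<equiv> (1 / (2 * C0 * Clin)) powr (1 / d)"
  assumes \<Omega>_bounded: "bounded \<Omega>" and \<Omega>_connected: "connected \<Omega>"
    and \<Omega>_lip: "lipschitz_domain \<Omega>" and \<Omega>_ball: "\<Omega> \<subseteq> ball 0 1"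
    and \<rho>_meas: "\<rho> \<in> borel_measurable lborel"
    and \<mu>_def: "\<mu> = density lborel (\<lambda>x. ennreal (\<rho> x) * indicator \<Omega> x)"
    and \<mu>_prob: "prob_space \<mu>"
    and lmu: "0 < lmu_lo" "AE x in lborel. x \<in> \<Omega> \<longrightarrow> lmu_lo \<le> \<rho> x \<and> \<rho> x \<le> lmu_hi"
    and \<nu>_prob: "prob_space \<nu>" and \<nu>_sets: "sets \<nu> = sets borel"
    and \<nu>_density: "\<exists>f \<in> borel_measurable lborel. \<nu> = density lborel f \<and>
                      (\<forall>y\<in>measure_support \<nu>. f y \<le> ennreal lnu)"
    and \<nu>_spt: "measure_support \<nu> \<subseteq> ball 0 1"
    and brenier_convex: "convex_on UNIV \<phi>"
    and brenier_grad: "\<And>x. (\<phi> has_derivative (\<lambda>h. T x \<bullet> h)) (at x)"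
    and brenier_push: "distr \<mu> borel T = \<nu>"
    and T_lip: "L-lipschitz_on UNIV T"
    and Cval: "1 \<le> Cval"
    and gap: "\<And>\<epsilon>. 0 < \<epsilon> \<Longrightarrow> \<epsilon> \<le> 1 \<Longrightarrow>
               (1 / Cval) * \<epsilon> powr (2 / (2 + d)) \<le> QOT_value \<epsilon> \<mu> \<nu> - OT_value \<mu> \<nu> \<and>
               QOT_value \<epsilon> \<mu> \<nu> - OT_value \<mu> \<nu> \<le> Cval * \<epsilon> powr (2 / (2 + d))"
  shows "0 < clg \<and>
    (\<forall>\<epsilon> \<pi>. 0 < \<epsilon> \<and> qot_optimizer \<epsilon> \<mu> \<nu> \<pi> \<longrightarrow>
       (\<epsilon> \<le> 1 \<longrightarrow> ereal (csm * \<epsilon> powr (1 / (2 + d)))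
                      \<le> directed_hausdorff (measure_support \<pi>) (graph_of T)) \<and>
       (1 \<le> \<epsilon> \<longrightarrow> ereal clg \<le> directed_hausdorff (measure_support \<pi>) (graph_of T)) \<and>
       ereal (min (csm * \<epsilon> powr (1 / (2 + d))) clg)
          \<le> directed_hausdorff (measure_support \<pi>) (graph_of T))"
  proof -
  let ?G = "graph_of T"
  have n1: "1 \<le> DIM('a)" by (simp add: DIM_positive Suc_le_eq)
  have \<Omega>_open: "open \<Omega>" using \<Omega>_lip unfolding lipschitz_domain_def by blast
  have s\<mu>: "sets \<mu> = sets borel" using \<mu>_def by simp
  have sp\<mu>: "space \<mu> = UNIV" using sets_eq_imp_space_eq[OF s\<mu>] by simp
  have sp\<nu>: "space \<nu> = UNIV" using sets_eq_imp_space_eq[OF \<nu>_sets] by simp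
  obtain f where fm: "f \<in> borel_measurable lborel" and \<nu>f: "\<nu> = density lborel f"
    and fb: "\<forall>y\<in>measure_support \<nu>. f y \<le> ennreal lnu"
    using \<nu>_density by blast
  have nb: "\<And>B. B \<in> sets borel \<Longrightarrow> emeasure \<nu> B \<le> ennreal lnu * emeasure lborel B"
    using nu_bound[OF \<nu>_sets fm \<nu>f fb] by blast
  have \<nu>1: "emeasure \<nu> UNIV = 1" using prob_space.emeasure_space_1[OF \<nu>_prob] sp\<nu> by simp
  have lnu_pos: "0 < lnu"
  proof (rule ccontr)
    assume "\<not> 0 < lnu"
    then have "ennreal lnu = 0" by (simp add: ennreal_neg)
    then have "emeasure \<nu> UNIV \<le> 0" using nb[of UNIV] by simp
    then show False using \<nu>1 by simp
  qed
  have ubv: "unit_ball_volume DIM('a) = unit_ball_vol (real DIM('a))"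
    by (simp add: unit_ball_volume_def unit_ball_vol_def)
  have C0pos: "0 < C0" unfolding C0_def ubv using lnu_pos
    by (intro mult_pos_pos) (auto, smt (verit) zero_le_power2)
  interpret pp: pair_prob_space \<mu> \<nu>
    by (simp add: pair_prob_space_def pair_sigma_finite_def prob_space_imp_sigma_finite \<mu>_prob \<nu>_prob)
  define P where "P = \<mu> \<Otimes>\<^sub>M \<nu>"
  have Pprob: "prob_space P" unfolding P_def using prob_space_pair \<mu>_prob \<nu>_prob by blast
  interpret P: prob_space P by (rule Pprob)
  have sP: "sets P = sets borel"
  proof -
    have "sets P = sets (borel \<Otimes>\<^sub>M borel)"
      unfolding P_def using s\<mu> \<nu>_sets by (intro sets_pair_measure_cong)
    also have "\<dots> = sets borel" by (metis borel_prod)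
    finally show ?thesis .
  qed
  have spP: "space P = UNIV" using sets_eq_imp_space_eq[OF sP] by simp
  have ae\<mu>: "AE x in \<mu>. x \<in> ball 0 1"
  proof (rule AE_I')
    have dm: "(\<lambda>x. ennreal (\<rho> x) * indicator \<Omega> x) \<in> borel_measurable lborel"
    proof -
      have \<Omega>m: "\<Omega> \<in> sets lborel" using \<Omega>_open by simp
      show ?thesis
        by (intro borel_measurable_times_ennreal borel_measurable_indicator
            measurable_compose[OF \<rho>_meas measurable_ennreal] \<Omega>m)
    qed
    have "emeasure \<mu> (- ball 0 1) = (\<integral>\<^sup>+ x. ennreal (\<rho> x) * indicator \<Omega> x * indicator (- ball 0 1) x \<partial>lborel)"
      unfolding \<mu>_def using dm by (subst emeasure_density) auto
    also have "\<dots> = (\<integral>\<^sup>+ x. 0 \<partial>(lborel :: 'a measure))"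
      using \<Omega>_ball by (intro nn_integral_cong) (auto split: split_indicator)
    finally show "- ball 0 1 \<in> null_sets \<mu>" using s\<mu> by (simp add: null_sets_def)
  qed (use sp\<mu> in auto)
  have ae\<nu>: "AE y in \<nu>. y \<in> ball 0 1"
  proof (rule AE_I')
    show "- measure_support \<nu> \<in> null_sets \<nu>"
      using support_props[OF \<nu>_sets] \<nu>_sets by (auto simp: null_sets_def)
  qed (use \<nu>_spt in auto)
  have qm: "qcost \<in> borel_measurable (borel :: ('a \<times> 'a) measure)"
    unfolding qcost_def by (intro borel_measurable_continuous_onI continuous_intros) auto
  have qmP: "qcost \<in> borel_measurable P"
    using qm measurable_cong_sets[OF sP refl] by blast
  have q2: "qcost (x, y) \<le> 2" if "x \<in> ball 0 1" "y \<in> ball (0::'a) 1" for x y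
  proof -
    have "norm (x - y) \<le> norm x + norm y" by (rule norm_triangle_ineq4)
    also have "\<dots> \<le> 2" using that by simp
    finally have "norm (x - y) \<le> 2" .
    then have "(norm (x - y))\<^sup>2 \<le> 2\<^sup>2" by (intro power_mono) auto
    then show ?thesis by (simp add: qcost_def)
  qed
  have aeP: "AE z in P. qcost z \<le> 2"
    unfolding P_def
  proof (rule pp.AE_pair_measure)
    show "{x \<in> space (\<mu> \<Otimes>\<^sub>M \<nu>). qcost x \<le> 2} \<in> sets (\<mu> \<Otimes>\<^sub>M \<nu>)"
      using qmP unfolding P_def by measurable
    show "AE x in \<mu>. AE y in \<nu>. qcost (x, y) \<le> 2"
    proof (rule AE_mp[OF ae\<mu>], rule AE_I2, rule impI)
      fix x :: 'a assume x: "x \<in> ball 0 1"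
      show "AE y in \<nu>. qcost (x, y) \<le> 2"
        by (rule AE_mp[OF ae\<nu>]) (use q2 x in \<open>auto intro!: AE_I2\<close>)
    qed
  qed
  have q0: "\<And>z. 0 \<le> qcost z" by (simp add: qcost_def)
  have costP: "transport_cost P \<le> 2"
  proof -
    have "transport_cost P \<le> (\<integral>\<^sup>+ z. ennreal 2 \<partial>P)"
    proof -
      have "AE z in P. ennreal (qcost z) \<le> ennreal 2"
        by (rule AE_mp[OF aeP]) (auto intro!: AE_I2, metis ennreal_leI ennreal_numeral)
      then show ?thesis unfolding transport_cost_def by (rule nn_integral_mono_AE)
    qed
    also have "\<dots> = 2" using P.emeasure_space_1 by simp
    finally show ?thesis .
  qed
  have costPfin: "transport_cost P < \<top>"
    using costP by (metis ennreal_numeral ennreal_less_top le_less_trans)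
  have intP: "integrable P qcost"
    using qmP costPfin q0 unfolding transport_cost_def by (intro integrableI_nonneg) (auto intro!: AE_I2)
  have intPeq: "(\<integral>z. qcost z \<partial>P) = enn2real (transport_cost P)"
  proof -
    have "(\<integral>\<^sup>+ z. ennreal (qcost z) \<partial>P) = ennreal (\<integral>z. qcost z \<partial>P)"
      using q0 by (intro nn_integral_eq_integral[OF intP]) (auto intro!: AE_I2)
    moreover have "0 \<le> (\<integral>z. qcost z \<partial>P)" using q0 by (intro integral_nonneg_AE) (auto intro!: AE_I2)
    ultimately show ?thesis unfolding transport_cost_def by simp
  qed
  have Pc: "P \<in> couplings \<mu> \<nu>"
  proof -
    have "distr P borel fst = distr P \<mu> fst"
      using s\<mu> by (intro distr_cong) auto
    also have "\<dots> = \<mu>" unfolding P_def by (rule prob_space.distr_pair_fst[OF \<nu>_prob])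
    finally have d1: "distr P borel fst = \<mu>" .
    have sndm: "snd \<in> measurable P borel"
      unfolding P_def using measurable_snd measurable_cong_sets[OF refl \<nu>_sets] by blast
    have d2: "distr P borel snd = \<nu>"
    proof (rule measure_eqI)
      show "sets (distr P borel snd) = sets \<nu>" using \<nu>_sets by simp
      fix A assume "A \<in> sets (distr P borel snd)"
      then have A: "A \<in> sets \<nu>" using \<nu>_sets by simp
      have "emeasure (distr P borel snd) A = emeasure P (snd -` A \<inter> space P)"
        using A \<nu>_sets sndm by (intro emeasure_distr) auto
      also have "snd -` A \<inter> space P = space \<mu> \<times> A" using spP sp\<mu> by auto
      also have "emeasure P (space \<mu> \<times> A) = emeasure \<mu> (space \<mu>) * emeasure \<nu> A"
        unfolding P_def using A
        by (intro sigma_finite_measure.emeasure_pair_measure_Times[OF prob_space_imp_sigma_finite[OF \<nu>_prob]]) auto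
      also have "\<dots> = emeasure \<nu> A" using prob_space.emeasure_space_1[OF \<mu>_prob] by simp
      finally show "emeasure (distr P borel snd) A = emeasure \<nu> A" .
    qed
    show ?thesis unfolding couplings_def using Pprob sP d1 d2 by auto
  qed
  have RNP: "AE z in P. 1 = RN_deriv P P z"
    by (rule P.RN_deriv_unique) (auto simp: density_1)
  have qotP: "qot_objective \<epsilon> \<mu> \<nu> P = transport_cost P + ennreal (\<epsilon> / 2)" for \<epsilon>
  proof -
    have "(\<integral>\<^sup>+ z. (RN_deriv P P z)\<^sup>2 \<partial>P) = (\<integral>\<^sup>+ z. 1 \<partial>P)"
      using RNP by (intro nn_integral_cong_AE) (auto elim: AE_mp)
    also have "\<dots> = 1" using P.emeasure_space_1 by simp
    finally show ?thesis
      unfolding qot_objective_def P_def[symmetric] absolutely_continuous_def by simp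
  qed
  have OTleP: "OT_value \<mu> \<nu> \<le> enn2real (transport_cost P)"
    unfolding OT_value_def by (intro enn2real_mono INF_lower Pc costPfin)
  have Clin_ge: "1 / 2 \<le> Clin"
    unfolding Clin_def P_def[symmetric] intPeq using OTleP by simp
  have main: "(\<epsilon> \<le> 1 \<longrightarrow> ereal (csm * \<epsilon> powr (1 / (2 + d)))
                      \<le> directed_hausdorff (measure_support \<pi>) ?G) \<and>
       (1 \<le> \<epsilon> \<longrightarrow> ereal clg \<le> directed_hausdorff (measure_support \<pi>) ?G) \<and>
       ereal (min (csm * \<epsilon> powr (1 / (2 + d))) clg)
          \<le> directed_hausdorff (measure_support \<pi>) ?G"
    if e: "0 < \<epsilon>" and opt: "qot_optimizer \<epsilon> \<mu> \<nu> \<pi>" for \<epsilon> \<pi>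
  proof -
    have \<pi>c: "\<pi> \<in> couplings \<mu> \<nu>"
      and \<pi>opt: "qot_objective \<epsilon> \<mu> \<nu> \<pi> = (INF p\<in>couplings \<mu> \<nu>. qot_objective \<epsilon> \<mu> \<nu> p)"
      using opt unfolding qot_optimizer_def by auto
    have \<pi>prob: "prob_space \<pi>" and s\<pi>: "sets \<pi> = sets borel"
      using \<pi>c unfolding couplings_def by auto
    have sp\<pi>: "space \<pi> = UNIV" using sets_eq_imp_space_eq[OF s\<pi>] by simp
    have Ile: "(INF p\<in>couplings \<mu> \<nu>. qot_objective \<epsilon> \<mu> \<nu> p) \<le> qot_objective \<epsilon> \<mu> \<nu> P"
      by (rule INF_lower[OF Pc])
    have Pfin: "qot_objective \<epsilon> \<mu> \<nu> P < \<top>"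
      unfolding qotP using costPfin by simp
    have \<pi>fin: "qot_objective \<epsilon> \<mu> \<nu> \<pi> < \<top>"
      using Ile Pfin \<pi>opt by simp
    have ac: "absolutely_continuous P \<pi>"
      using \<pi>fin unfolding qot_objective_def P_def[symmetric] by (auto split: if_splits)
    define h where "h = RN_deriv P \<pi>"
    define A where "A = (\<integral>\<^sup>+ z. (h z)\<^sup>2 \<partial>P)"
    have q\<pi>: "qot_objective \<epsilon> \<mu> \<nu> \<pi> = transport_cost \<pi> + ennreal (\<epsilon> / 2) * A"
      using ac unfolding qot_objective_def P_def[symmetric] A_def h_def by simp
    have Afin: "A < \<top>"
    proof (rule ccontr)
      assume "\<not> A < \<top>"
      then have "A = \<top>" using less_top by blast
      then have "ennreal (\<epsilon> / 2) * A = \<top>" using e by (simp add: ennreal_mult_top)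
      then show False using \<pi>fin q\<pi> by simp
    qed
    have c\<pi>fin: "transport_cost \<pi> < \<top>" using \<pi>fin q\<pi> by simp
    have mfin: "ennreal (\<epsilon> / 2) * A < \<top>" using Afin by (simp add: ennreal_mult_less_top)
    have QOTeq: "QOT_value \<epsilon> \<mu> \<nu> = enn2real (transport_cost \<pi>) + \<epsilon> / 2 * enn2real A"
      unfolding QOT_value_def \<pi>opt[symmetric] q\<pi> using c\<pi>fin mfin e
      by (simp add: enn2real_plus enn2real_mult)
    have OTle: "OT_value \<mu> \<nu> \<le> enn2real (transport_cost \<pi>)"
      unfolding OT_value_def by (intro enn2real_mono INF_lower \<pi>c c\<pi>fin)
    have \<Delta>low: "\<epsilon> / 2 * enn2real A \<le> QOT_value \<epsilon> \<mu> \<nu> - OT_value \<mu> \<nu>"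
      using QOTeq OTle by simp
    have QOTup: "QOT_value \<epsilon> \<mu> \<nu> \<le> (\<integral>z. qcost z \<partial>P) + \<epsilon> / 2"
    proof -
      have "QOT_value \<epsilon> \<mu> \<nu> \<le> enn2real (qot_objective \<epsilon> \<mu> \<nu> P)"
        unfolding QOT_value_def by (intro enn2real_mono Ile Pfin)
      also have "\<dots> = (\<integral>z. qcost z \<partial>P) + \<epsilon> / 2"
        unfolding qotP intPeq using costPfin e by (simp add: enn2real_plus)
      finally show ?thesis .
    qed
    have sptc: "closed (measure_support \<pi>)" and sptn: "emeasure \<pi> (- measure_support \<pi>) = 0"
      using support_props[OF s\<pi>] by auto
    have dens: "density P h = \<pi>" unfolding h_def using P.density_RN_deriv[OF ac] s\<pi> sP by simp
    have hm: "h \<in> borel_measurable P" unfolding h_def by simp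
    have \<pi>1: "emeasure \<pi> UNIV = 1" using prob_space.emeasure_space_1[OF \<pi>prob] sp\<pi> by simp
    have geo: "1 \<le> enn2real (emeasure P {z. infdist z ?G \<le> r}) * enn2real A
        \<and> enn2real (emeasure P {z. infdist z ?G \<le> r}) \<le> C0 * r ^ DIM('a)"
      if r: "0 \<le> r" and sub: "measure_support \<pi> \<subseteq> {z. infdist z ?G \<le> r}" for r
    proof
      let ?S = "{z. infdist z ?G \<le> r}"
      have cl: "closed ?S" by (intro closed_Collect_le continuous_intros)
      then have Sm: "?S \<in> sets P" using sP by simp
      have "emeasure \<pi> UNIV \<le> emeasure \<pi> ?S + emeasure \<pi> (- ?S)"
        using cl s\<pi> by (intro order_trans[OF _ emeasure_subadditive]) auto
      also have "emeasure \<pi> (- ?S) \<le> emeasure \<pi> (- measure_support \<pi>)"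
        using sub s\<pi> sptc by (intro emeasure_mono) auto
      finally have "1 \<le> emeasure \<pi> ?S" using \<pi>1 sptn by simp
      also have "emeasure \<pi> ?S = (\<integral>\<^sup>+ z. h z * indicator ?S z \<partial>P)"
        using Sm hm by (subst dens[symmetric]) (simp add: emeasure_density)
      finally have one: "1 \<le> (\<integral>\<^sup>+ z. h z * indicator ?S z \<partial>P)" .
      show "1 \<le> enn2real (emeasure P ?S) * enn2real A"
      proof -
        have fS: "emeasure P ?S < \<top>" using P.emeasure_finite[of ?S] less_top by blast
        show ?thesis using cs_enn[OF hm Sm one _ fS] Afin unfolding A_def by blast
      qed
      have "emeasure P ?S \<le> ennreal (C0 * r ^ DIM('a))"
        unfolding P_def C0_def d_def using prod_bound[OF \<mu>_prob s\<mu> \<nu>_prob \<nu>_sets nb T_lip r] by simp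
      moreover have "0 \<le> C0 * r ^ DIM('a)" using C0pos r by simp
      ultimately show "enn2real (emeasure P ?S) \<le> C0 * r ^ DIM('a)"
        using enn2real_mono[of "emeasure P ?S" "ennreal (C0 * r ^ DIM('a))"] by simp
    qed
    have sptne: "measure_support \<pi> \<noteq> {}"
    proof
      assume "measure_support \<pi> = {}"
      then show False using sptn \<pi>1 by simp
    qed
    have reduce: "ereal c \<le> directed_hausdorff (measure_support \<pi>) ?G"
      if H: "\<And>r. 0 \<le> r \<Longrightarrow> measure_support \<pi> \<subseteq> {z. infdist z ?G \<le> r} \<Longrightarrow> c \<le> r" for c
    proof (cases "directed_hausdorff (measure_support \<pi>) ?G = \<infinity>")
      case True then show ?thesis by simp
    next
      case False
      obtain a where a: "a \<in> measure_support \<pi>" using sptne by blast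
      have up: "ereal (infdist b ?G) \<le> directed_hausdorff (measure_support \<pi>) ?G"
        if "b \<in> measure_support \<pi>" for b
        unfolding directed_hausdorff_def using that by (rule SUP_upper)
      have "ereal 0 \<le> directed_hausdorff (measure_support \<pi>) ?G"
        using up[OF a] infdist_nonneg[of a ?G] by (metis ereal_less_eq(3) order_trans)
      then obtain r where r: "directed_hausdorff (measure_support \<pi>) ?G = ereal r" "0 \<le> r"
        using False by (cases "directed_hausdorff (measure_support \<pi>) ?G") auto
      have "measure_support \<pi> \<subseteq> {z. infdist z ?G \<le> r}"
        using up r by auto
      then have "c \<le> r" using H r by blast
      then show ?thesis using r by simp
    qed
    have small: "ereal (csm * \<epsilon> powr (1 / (2 + d))) \<le> directed_hausdorff (measure_support \<pi>) ?G"
      if e1: "\<epsilon> \<le> 1"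
    proof (rule reduce)
      fix r assume r: "0 \<le> r" and sub: "measure_support \<pi> \<subseteq> {z. infdist z ?G \<le> r}"
      note g = geo[OF r sub]
      have gp: "\<epsilon> / 2 * enn2real A \<le> Cval * \<epsilon> powr (2 / (2 + real DIM('a)))"
        using \<Delta>low gap[OF e e1] unfolding d_def by linarith
      show "csm * \<epsilon> powr (1 / (2 + d)) \<le> r"
        unfolding csm_def d_def
        by (rule small_case[OF n1 C0pos r _ _ conjunct1[OF g] conjunct2[OF g] e e1 gp Cval]) auto
    qed
    have large: "ereal clg \<le> directed_hausdorff (measure_support \<pi>) ?G"
      if e1: "1 \<le> \<epsilon>"
    proof (rule reduce)
      fix r assume r: "0 \<le> r" and sub: "measure_support \<pi> \<subseteq> {z. infdist z ?G \<le> r}"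
      note g = geo[OF r sub]
      have gp: "\<epsilon> / 2 * enn2real A \<le> Clin - 1/2 + \<epsilon> / 2"
        using \<Delta>low QOTup unfolding Clin_def P_def[symmetric] by linarith
      show "clg \<le> r"
        unfolding clg_def d_def
        by (rule large_case[OF n1 C0pos r _ _ conjunct1[OF g] conjunct2[OF g] e1 gp Clin_ge]) auto
    qed
    show ?thesis
    proof (intro conjI impI)
      show "ereal (min (csm * \<epsilon> powr (1 / (2 + d))) clg) \<le> directed_hausdorff (measure_support \<pi>) ?G"
      proof (cases "\<epsilon> \<le> 1")
        case True
        then show ?thesis using small[OF True]
          by (metis ereal_less_eq(3) min.cobounded1 order_trans)
      next
        case False
        then show ?thesis using large[of] False
          by (metis ereal_less_eq(3) min.cobounded2 order_trans linear)
      qed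
    qed (use small large in auto)
  qed
  have clg_pos: "0 < clg"
    unfolding clg_def using C0pos Clin_ge by simp
  show ?thesis using clg_pos main by blast
qed

end
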